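(* Let $n\ge1$ and let $\mathcal T\in\mathbf{Rel}^n\mathbf{Cat}$ be such that its ambient category $a\mathcal T$ is a poset with a terminal object. Then for every $X\in\mathrm{s}^n\mathcal S$ the canonical map $$\operatorname{colim}_{\Delta X}\operatorname{map}(\mathcal T,\Delta_{\mathrm{rel}}F)\to\operatorname{map}(\mathcal T,\Delta_{\mathrm{rel}}X)$$ is an isomorphism (bijection of sets).
   Context: An $n$-relative category $\mathcal C=(a\mathcal C,v_1\mathcal C,\dots,v_n\mathcal C,w\mathcal C)$ consists of a category $a\mathcal C$ and subcategories $v_1\mathcal C,\dots,v_n\mathcal C,w\mathcal C\subset a\mathcal C$, each containing all objects, with $w\mathcal C\subset v_i\mathcal C$ for all $i$, such that every map of $a\mathcal C$ is a finite composite of maps in the $v_i\mathcal C$, and every relation in $a\mathcal C$ follows from commutativity of squares $y_2x_1=x_2y_1$ with $x_1,x_2\in v_i\mathcal C$, $y_1,y_2\in v_j\mathcal C$. $\mathbf{Rel}^n\mathbf{Cat}$ is the category of small $n$-relative categories and functors of ambient categories preserving $w$ and each $v_i$; $\operatorname{map}(\mathcal C,\mathcal D)$ denotes the set of maps $\mathcal C\to\mathcal D$ in $\mathbf{Rel}^n\mathbf{Cat}$. $\mathrm{s}^n\mathcal S$ is the category of $(n+1)$-simplicial sets with standard multisimplices $\Delta[p_n,\dots,p_1,q]$; $\Delta[-]$ is their full subcategory (maps = tuples of order-preserving maps $\mathbf p_i\to\mathbf p_i'$, $\mathbf q\to\mathbf q'$, where $\mathbf p$ is the poset $0\to\cdots\to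 p$). $\Delta X=\Delta[-]\downarrow X$, and $F\colon\Delta X\to\mathrm{s}^n\mathcal S$ sends $\Delta[p_n,\dots,p_1,q]\to X$ to $\Delta[p_n,\dots,p_1,q]$. $\Delta_{\mathrm{rel}}[-]$ is the $n$-relative category with ambient category $\Delta[-]$, $v_i$ the maps whose component $\mathbf p_i\to\mathbf p_i'$ sends $p_i$ to $p_i'$, and $w=\bigcap_iv_i$. For $Y\in\mathrm{s}^n\mathcal S$, $\Delta_{\mathrm{rel}}Y=\Delta_{\mathrm{rel}}[-]\downarrow Y$ is the $n$-relative over category (ambient category $\Delta[-]\downarrow Y$; a map lies in $v_i$ or $w$ iff its underlying map in $\Delta[-]$ does), functorial in $Y$. *)

theory Defs
  imports Main
begin

record ('o, 'm) cat =
  Ob   :: "'o set"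
  Mor  :: "'m set"
  Dom  :: "'m \<Rightarrow> 'o"
  Cod  :: "'m \<Rightarrow> 'o"
  Id   :: "'o \<Rightarrow> 'm"
  Comp :: "'m \<Rightarrow> 'm \<Rightarrow> 'm"   (* Comp g f = g o f *)

record ('o, 'm) relcat = "('o, 'm) cat" +
  V :: "nat \<Rightarrow> 'm set"      (* V i = v_i, used for 1 <= i <= n *)
  W :: "'m set"

definition is_cat :: "('o, 'm, 'e) cat_scheme \<Rightarrow> bool" where
  "is_cat C \<longleftrightarrow>
     (\<forall>f\<in>Mor C. Dom C f \<in> Ob C \<and> Cod C f \<in> Ob C) \<and>
     (\<forall>a\<in>Ob C. Id C a \<in> Mor C \<and> Dom C (Id C a) = a \<and> Cod C (Id C a) = a) \<and>
     (\<forall>f\<in>Mor C. \<forall>g\<in>Mor C. Cod C f = Dom C g \<longrightarrow>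
        Comp C g f \<in> Mor C \<and> Dom C (Comp C g f) = Dom C f \<and> Cod C (Comp C g f) = Cod C g) \<and>
     (\<forall>f\<in>Mor C. Comp C (Id C (Cod C f)) f = f \<and> Comp C f (Id C (Dom C f)) = f) \<and>
     (\<forall>f\<in>Mor C. \<forall>g\<in>Mor C. \<forall>h\<in>Mor C. Cod C f = Dom C g \<and> Cod C g = Dom C h \<longrightarrow>
        Comp C h (Comp C g f) = Comp C (Comp C h g) f)"

definition is_wide_subcat :: "('o, 'm, 'e) cat_scheme \<Rightarrow> 'm set \<Rightarrow> bool" where
  "is_wide_subcat C S \<longleftrightarrow> S \<subseteq> Mor C \<and> (\<forall>a\<in>Ob C. Id C a \<in> S) \<and>
     (\<forall>f\<in>S. \<forall>g\<in>S. Cod C f = Dom C g \<longrightarrow> Comp C g f \<in> S)"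

fun valid_path :: "nat \<Rightarrow> ('o, 'm, 'e) relcat_scheme \<Rightarrow> 'o \<Rightarrow> (nat \<times> 'm) list \<Rightarrow> bool" where
  "valid_path n C a [] \<longleftrightarrow> a \<in> Ob C"
| "valid_path n C a ((i, f) # ps) \<longleftrightarrow>
     a \<in> Ob C \<and> i \<in> {1..n} \<and> f \<in> V C i \<and> Dom C f = a \<and> valid_path n C (Cod C f) ps"

fun path_end :: "('o, 'm, 'e) relcat_scheme \<Rightarrow> 'o \<Rightarrow> (nat \<times> 'm) list \<Rightarrow> 'o" where
  "path_end C a [] = a"
| "path_end C a ((i, f) # ps) = path_end C (Cod C f) ps"

fun path_comp :: "('o, 'm, 'e) relcat_scheme \<Rightarrow> 'o \<Rightarrow> (nat \<times> 'm) list \<Rightarrow> 'm" where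
  "path_comp C a [] = Id C a"
| "path_comp C a ((i, f) # ps) = Comp C (path_comp C (Cod C f) ps) f"

inductive sq_step :: "nat \<Rightarrow> ('o, 'm, 'e) relcat_scheme \<Rightarrow> 'o \<Rightarrow> (nat \<times> 'm) list \<Rightarrow> (nat \<times> 'm) list \<Rightarrow> bool"
  for n C where
  id_rule: "a \<in> Ob C \<Longrightarrow> i \<in> {1..n} \<Longrightarrow> sq_step n C a [(i, Id C a)] []"
| square: "i \<in> {1..n} \<Longrightarrow> j \<in> {1..n} \<Longrightarrow> a \<in> Ob C \<Longrightarrow>
    x1 \<in> V C i \<Longrightarrow> x2 \<in> V C i \<Longrightarrow> y1 \<in> V C j \<Longrightarrow> y2 \<in> V C j \<Longrightarrow>
    Dom C x1 = a \<Longrightarrow> Dom C y1 = a \<Longrightarrow> Cod C x1 = Dom C y2 \<Longrightarrow> Cod C y1 = Dom C x2 \<Longrightarrow>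
    Cod C y2 = Cod C x2 \<Longrightarrow> Comp C y2 x1 = Comp C x2 y1 \<Longrightarrow>
    sq_step n C a [(i, x1), (j, y2)] [(j, y1), (i, x2)]"
| in_context: "sq_step n C (path_end C a u) l l' \<Longrightarrow> valid_path n C a (u @ l @ v) \<Longrightarrow>
    sq_step n C a (u @ l @ v) (u @ l' @ v)"

definition is_relcat :: "nat \<Rightarrow> ('o, 'm, 'e) relcat_scheme \<Rightarrow> bool" where
  "is_relcat n C \<longleftrightarrow> is_cat C \<and>
     (\<forall>i\<in>{1..n}. is_wide_subcat C (V C i)) \<and> is_wide_subcat C (W C) \<and>
     (\<forall>i\<in>{1..n}. W C \<subseteq> V C i) \<and>
     (\<forall>f\<in>Mor C. \<exists>ps. valid_path n C (Dom C f) ps \<and> path_comp C (Dom C f) ps = f) \<and>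
     (\<forall>a\<in>Ob C. \<forall>ps qs. valid_path n C a ps \<and> valid_path n C a qs \<and>
        path_end C a ps = path_end C a qs \<and> path_comp C a ps = path_comp C a qs \<longrightarrow>
        equivclp (sq_step n C a) ps qs)"

definition is_poset_cat :: "('o, 'm, 'e) cat_scheme \<Rightarrow> bool" where
  "is_poset_cat C \<longleftrightarrow>
     (\<forall>f\<in>Mor C. \<forall>g\<in>Mor C. Dom C f = Dom C g \<and> Cod C f = Cod C g \<longrightarrow> f = g) \<and>
     (\<forall>f\<in>Mor C. \<forall>g\<in>Mor C. Dom C f = Cod C g \<and> Cod C f = Dom C g \<longrightarrow> Dom C f = Cod C f)"

definition has_terminal :: "('o, 'm, 'e) cat_scheme \<Rightarrow> bool" where
  "has_terminal C \<longleftrightarrow> (\<exists>t\<in>Ob C. \<forall>a\<in>Ob C. \<exists>!f. f \<in> Mor C \<and> Dom C f = a \<and> Cod C f = t)"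

text \<open>map(C, D): maps in Rel^n Cat (functors preserving W and each V_i),
  made extensional outside the objects/morphisms of C.\<close>

definition relmaps :: "nat \<Rightarrow> ('o, 'm, 'e) relcat_scheme \<Rightarrow> ('p, 'n, 'f) relcat_scheme
    \<Rightarrow> (('o \<Rightarrow> 'p) \<times> ('m \<Rightarrow> 'n)) set" where
  "relmaps n C D = {(Fo, Fm).
     (\<forall>a\<in>Ob C. Fo a \<in> Ob D) \<and>
     (\<forall>f\<in>Mor C. Fm f \<in> Mor D \<and> Dom D (Fm f) = Fo (Dom C f) \<and> Cod D (Fm f) = Fo (Cod C f)) \<and>
     (\<forall>a\<in>Ob C. Fm (Id C a) = Id D (Fo a)) \<and>
     (\<forall>f\<in>Mor C. \<forall>g\<in>Mor C. Cod C f = Dom C g \<longrightarrow> Fm (Comp C g f) = Comp D (Fm g) (Fm f)) \<and>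
     (\<forall>i\<in>{1..n}. \<forall>f\<in>V C i. Fm f \<in> V D i) \<and>
     (\<forall>f\<in>W C. Fm f \<in> W D) \<and>
     (\<forall>a. a \<notin> Ob C \<longrightarrow> Fo a = undefined) \<and>
     (\<forall>f. f \<notin> Mor C \<longrightarrow> Fm f = undefined)}"

definition fcomp :: "('o, 'm, 'e) cat_scheme \<Rightarrow> (('p \<Rightarrow> 'q) \<times> ('n \<Rightarrow> 'r))
    \<Rightarrow> (('o \<Rightarrow> 'p) \<times> ('m \<Rightarrow> 'n)) \<Rightarrow> (('o \<Rightarrow> 'q) \<times> ('m \<Rightarrow> 'r))" where
  "fcomp C H F = ((\<lambda>a. if a \<in> Ob C then fst H (fst F a) else undefined),
                  (\<lambda>f. if f \<in> Mor C then snd H (snd F f) else undefined))"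

text \<open>A multi-index (p_n,...,p_1,q) is the list [q, p_1, ..., p_n] of length n+1
  (position 0 is q, position i is p_i).  A map of Delta[-] from p to p' is a list of
  n+1 order-preserving maps, the k-th one  {0..p!k} -> {0..p'!k}  being represented by
  the list of its values.\<close>

definition midx :: "nat \<Rightarrow> nat list \<Rightarrow> bool" where
  "midx n p \<longleftrightarrow> length p = Suc n"

definition dmor :: "nat \<Rightarrow> nat list \<Rightarrow> nat list \<Rightarrow> nat list list \<Rightarrow> bool" where
  "dmor n p p' fs \<longleftrightarrow> midx n p \<and> midx n p' \<and> length fs = Suc n \<and>
     (\<forall>k < Suc n. length (fs ! k) = Suc (p ! k) \<and> sorted (fs ! k) \<and>
        (\<forall>v \<in> set (fs ! k). v \<le> p' ! k))"

definition did :: "nat list \<Rightarrow> nat list list" where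
  "did p = map (\<lambda>m. [0..<Suc m]) p"

definition dcomp :: "nat list list \<Rightarrow> nat list list \<Rightarrow> nat list list" where
  "dcomp gs fs = map2 (\<lambda>g f. map (\<lambda>j. g ! j) f) gs fs"   (* gs o fs *)

record 'x ssset =
  Xs  :: "nat list \<Rightarrow> 'x set"
  act :: "nat list \<Rightarrow> nat list \<Rightarrow> nat list list \<Rightarrow> 'x \<Rightarrow> 'x"  (* act p p' alpha : X_{p'} -> X_p *)

definition is_ssset :: "nat \<Rightarrow> 'x ssset \<Rightarrow> bool" where
  "is_ssset n X \<longleftrightarrow>
     (\<forall>p p' fs x. dmor n p p' fs \<and> x \<in> Xs X p' \<longrightarrow> act X p p' fs x \<in> Xs X p) \<and>
     (\<forall>p x. midx n p \<and> x \<in> Xs X p \<longrightarrow> act X p p (did p) x = x) \<and>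
     (\<forall>p p' p'' f g x. dmor n p p' f \<and> dmor n p' p'' g \<and> x \<in> Xs X p'' \<longrightarrow>
        act X p p'' (dcomp g f) x = act X p p' f (act X p' p'' g x))"

definition yoneda :: "nat \<Rightarrow> nat list \<Rightarrow> nat list list ssset" where
  "yoneda n p = \<lparr> Xs = (\<lambda>p'. {fs. dmor n p' p fs}), act = (\<lambda>a b alpha beta. dcomp beta alpha) \<rparr>"

type_synonym 'x dobj = "nat list \<times> 'x"
type_synonym 'x dmorph = "'x dobj \<times> 'x dobj \<times> nat list list"

definition delta_rel :: "nat \<Rightarrow> 'x ssset \<Rightarrow> ('x dobj, 'x dmorph) relcat" where
  "delta_rel n Y =
    (let Obs = {(p, y). midx n p \<and> y \<in> Xs Y p};
         Ms = {((p, y), (p', y'), alpha). (p, y) \<in> Obs \<and> (p', y') \<in> Obs \<and>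
                dmor n p p' alpha \<and> act Y p p' alpha y' = y};
         Vi = (\<lambda>i. {m \<in> Ms. (snd (snd m) ! i) ! (fst (fst m) ! i) = fst (fst (snd m)) ! i})
     in \<lparr> Ob = Obs, Mor = Ms,
          Dom = (\<lambda>m. fst m), Cod = (\<lambda>m. fst (snd m)),
          Id = (\<lambda>a. (a, a, did (fst a))),
          Comp = (\<lambda>g f. (fst f, fst (snd g), dcomp (snd (snd g)) (snd (snd f)))),
          V = Vi,
          W = {m \<in> Ms. \<forall>i\<in>{1..n}. m \<in> Vi i} \<rparr>)"

definition drel_fun :: "(nat list \<Rightarrow> 'y \<Rightarrow> 'z) \<Rightarrow> (('y dobj \<Rightarrow> 'z dobj) \<times> ('y dmorph \<Rightarrow> 'z dmorph))" where
  "drel_fun f = ((\<lambda>(p, y). (p, f p y)),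
                 (\<lambda>((p, y), (p', y'), alpha). ((p, f p y), (p', f p' y'), alpha)))"

text \<open>Elements of the disjoint union of map(T, Delta_rel F(sigma)) over the objects
  sigma = (p, x) of Delta X (x in X_p corresponds to Delta[p] -> X).\<close>

definition colim_elems :: "nat \<Rightarrow> ('o, 'm, 'e) relcat_scheme \<Rightarrow> 'x ssset
   \<Rightarrow> ((nat list \<times> 'x) \<times> (('o \<Rightarrow> nat list list dobj) \<times> ('m \<Rightarrow> nat list list dmorph))) set" where
  "colim_elems n T X = {((p, x), phi). midx n p \<and> x \<in> Xs X p \<and>
       phi \<in> relmaps n T (delta_rel n (yoneda n p))}"

text \<open>Generating relation: for a map gamma : (p, x) -> (p', x') of Delta X
  (i.e. gamma : p -> p' with gamma^* x' = x), phi is related to Delta_rel(gamma) o phi.\<close>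

definition colim_gen :: "nat \<Rightarrow> ('o, 'm, 'e) relcat_scheme \<Rightarrow> 'x ssset
   \<Rightarrow> (((nat list \<times> 'x) \<times> (('o \<Rightarrow> nat list list dobj) \<times> ('m \<Rightarrow> nat list list dmorph))) \<times>
       ((nat list \<times> 'x) \<times> (('o \<Rightarrow> nat list list dobj) \<times> ('m \<Rightarrow> nat list list dmorph)))) set" where
  "colim_gen n T X = {(((p, x), phi), ((p', x'), psi)).
       ((p, x), phi) \<in> colim_elems n T X \<and> ((p', x'), psi) \<in> colim_elems n T X \<and>
       (\<exists>gamma. dmor n p p' gamma \<and> act X p p' gamma x' = x \<and>
          psi = fcomp T (drel_fun (\<lambda>q beta. dcomp gamma beta)) phi)}"

definition colim_rel where
  "colim_rel n T X = (colim_gen n T X \<union> (colim_gen n T X)\<inverse>)\<^sup>*"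

definition colim_set where
  "colim_set n T X = colim_elems n T X // colim_rel n T X"

text \<open>Canonical map on representatives: phi |-> Delta_rel(x) o phi.\<close>

definition canon :: "nat \<Rightarrow> ('o, 'm, 'e) relcat_scheme \<Rightarrow> 'x ssset
   \<Rightarrow> ((nat list \<times> 'x) \<times> (('o \<Rightarrow> nat list list dobj) \<times> ('m \<Rightarrow> nat list list dmorph)))
   \<Rightarrow> (('o \<Rightarrow> 'x dobj) \<times> ('m \<Rightarrow> 'x dmorph))" where
  "canon n T X e = (case e of ((p, x), phi) \<Rightarrow>
       fcomp T (drel_fun (\<lambda>q beta. act X q p beta x)) phi)"

definition canon_colim where
  "canon_colim n T X = (\<lambda>c. the_elem (canon n T X ` c))"

end

theory Submission
  imports Defs
begin

lemma drel_simps: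
  "Ob (delta_rel n Y) = {(p, y). midx n p \<and> y \<in> Xs Y p}"
  "Dom (delta_rel n Y) = fst"
  "Cod (delta_rel n Y) = (\<lambda>m. fst (snd m))"
  "Id (delta_rel n Y) = (\<lambda>a. (a, a, did (fst a)))"
  "Comp (delta_rel n Y) = (\<lambda>g f. (fst f, fst (snd g), dcomp (snd (snd g)) (snd (snd f))))"
  by (simp_all add: delta_rel_def Let_def fun_eq_iff)

lemma drel_Mor: "Mor (delta_rel n Y) = {((p, y), (p', y'), alpha). midx n p \<and> y \<in> Xs Y p \<and>
   midx n p' \<and> y' \<in> Xs Y p' \<and> dmor n p p' alpha \<and> act Y p p' alpha y' = y}"
  by (auto simp: delta_rel_def Let_def)

lemma drel_Mor_iff: "(((p, y), (p', y'), alpha) \<in> Mor (delta_rel n Y)) \<longleftrightarrow> (midx n p \<and> y \<in> Xs Y p \<and>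
   midx n p' \<and> y' \<in> Xs Y p' \<and> dmor n p p' alpha \<and> act Y p p' alpha y' = y)"
  by (simp add: drel_Mor)

lemma drel_V: "V (delta_rel n Y) i = {m \<in> Mor (delta_rel n Y). (snd (snd m) ! i) ! (fst (fst m) ! i) = fst (fst (snd m)) ! i}"
  by (auto simp add: delta_rel_def Let_def)

lemma drel_W: "W (delta_rel n Y) = {m \<in> Mor (delta_rel n Y). \<forall>i\<in>{1..n}. (snd (snd m) ! i) ! (fst (fst m) ! i) = fst (fst (snd m)) ! i}"
  by (auto simp add: delta_rel_def Let_def)

lemma relmaps_mem: "((Fo, Fm) \<in> relmaps n C D) \<longleftrightarrow>
     (\<forall>a\<in>Ob C. Fo a \<in> Ob D) \<and>
     (\<forall>f\<in>Mor C. Fm f \<in> Mor D \<and> Dom D (Fm f) = Fo (Dom C f) \<and> Cod D (Fm f) = Fo (Cod C f)) \<and>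
     (\<forall>a\<in>Ob C. Fm (Id C a) = Id D (Fo a)) \<and>
     (\<forall>f\<in>Mor C. \<forall>g\<in>Mor C. Cod C f = Dom C g \<longrightarrow> Fm (Comp C g f) = Comp D (Fm g) (Fm f)) \<and>
     (\<forall>i\<in>{1..n}. \<forall>f\<in>V C i. Fm f \<in> V D i) \<and>
     (\<forall>f\<in>W C. Fm f \<in> W D) \<and>
     (\<forall>a. a \<notin> Ob C \<longrightarrow> Fo a = undefined) \<and>
     (\<forall>f. f \<notin> Mor C \<longrightarrow> Fm f = undefined)"
  by (simp add: relmaps_def)

definition relfun where
  "relfun n D D' H \<longleftrightarrow> (\<forall>a\<in>Ob D. fst H a \<in> Ob D') \<and>
    (\<forall>m\<in>Mor D. snd H m \<in> Mor D' \<and> Dom D' (snd H m) = fst H (Dom D m) \<and> Cod D' (snd H m) = fst H (Cod D m)) \<and>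
    (\<forall>a\<in>Ob D. snd H (Id D a) = Id D' (fst H a)) \<and>
    (\<forall>f\<in>Mor D. \<forall>g\<in>Mor D. Cod D f = Dom D g \<longrightarrow> snd H (Comp D g f) = Comp D' (snd H g) (snd H f)) \<and>
    (\<forall>i\<in>{1..n}. \<forall>f\<in>V D i. snd H f \<in> V D' i) \<and> (\<forall>f\<in>W D. snd H f \<in> W D')"

lemma relcat_facts:
  assumes "is_relcat n T"
  shows "\<And>i. i \<in> {1..n} \<Longrightarrow> V T i \<subseteq> Mor T" "W T \<subseteq> Mor T"
    "\<And>f. f \<in> Mor T \<Longrightarrow> Dom T f \<in> Ob T \<and> Cod T f \<in> Ob T"
    "\<And>a. a \<in> Ob T \<Longrightarrow> Id T a \<in> Mor T \<and> Dom T (Id T a) = a \<and> Cod T (Id T a) = a"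
    "\<And>f g. f \<in> Mor T \<Longrightarrow> g \<in> Mor T \<Longrightarrow> Cod T f = Dom T g \<Longrightarrow>
        Comp T g f \<in> Mor T \<and> Dom T (Comp T g f) = Dom T f \<and> Cod T (Comp T g f) = Cod T g"
proof -
  have c: "is_cat T" using assms unfolding is_relcat_def by (elim conjE) assumption
  have v: "\<forall>i\<in>{1..n}. is_wide_subcat T (V T i)" using assms unfolding is_relcat_def by (elim conjE) assumption
  have w: "is_wide_subcat T (W T)" using assms unfolding is_relcat_def by (elim conjE) assumption
  show "\<And>i. i \<in> {1..n} \<Longrightarrow> V T i \<subseteq> Mor T" using v unfolding is_wide_subcat_def by blast
  show "W T \<subseteq> Mor T" using w unfolding is_wide_subcat_def by blast
  show "\<And>f. f \<in> Mor T \<Longrightarrow> Dom T f \<in> Ob T \<and> Cod T f \<in> Ob T"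
    using c unfolding is_cat_def by (elim conjE) blast
  show "\<And>a. a \<in> Ob T \<Longrightarrow> Id T a \<in> Mor T \<and> Dom T (Id T a) = a \<and> Cod T (Id T a) = a"
    using c unfolding is_cat_def by (elim conjE) blast
  show "\<And>f g. f \<in> Mor T \<Longrightarrow> g \<in> Mor T \<Longrightarrow> Cod T f = Dom T g \<Longrightarrow>
        Comp T g f \<in> Mor T \<and> Dom T (Comp T g f) = Dom T f \<and> Cod T (Comp T g f) = Cod T g"
    using c unfolding is_cat_def by (elim conjE) blast
qed

lemma relmapsE:
  assumes "(Fo, Fm) \<in> relmaps n C D"
  shows "\<And>a. a \<in> Ob C \<Longrightarrow> Fo a \<in> Ob D"
    "\<And>f. f \<in> Mor C \<Longrightarrow> Fm f \<in> Mor D"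
    "\<And>f. f \<in> Mor C \<Longrightarrow> Dom D (Fm f) = Fo (Dom C f)"
    "\<And>f. f \<in> Mor C \<Longrightarrow> Cod D (Fm f) = Fo (Cod C f)"
    "\<And>a. a \<in> Ob C \<Longrightarrow> Fm (Id C a) = Id D (Fo a)"
    "\<And>f g. f \<in> Mor C \<Longrightarrow> g \<in> Mor C \<Longrightarrow> Cod C f = Dom C g \<Longrightarrow> Fm (Comp C g f) = Comp D (Fm g) (Fm f)"
    "\<And>i f. i \<in> {1..n} \<Longrightarrow> f \<in> V C i \<Longrightarrow> Fm f \<in> V D i"
    "\<And>f. f \<in> W C \<Longrightarrow> Fm f \<in> W D"
    "\<And>a. a \<notin> Ob C \<Longrightarrow> Fo a = undefined"
    "\<And>f. f \<notin> Mor C \<Longrightarrow> Fm f = undefined"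
  using assms unfolding relmaps_mem by blast+

lemma relfunE:
  assumes "relfun n D D' H"
  shows "\<And>a. a \<in> Ob D \<Longrightarrow> fst H a \<in> Ob D'"
    "\<And>m. m \<in> Mor D \<Longrightarrow> snd H m \<in> Mor D'"
    "\<And>m. m \<in> Mor D \<Longrightarrow> Dom D' (snd H m) = fst H (Dom D m)"
    "\<And>m. m \<in> Mor D \<Longrightarrow> Cod D' (snd H m) = fst H (Cod D m)"
    "\<And>a. a \<in> Ob D \<Longrightarrow> snd H (Id D a) = Id D' (fst H a)"
    "\<And>f g. f \<in> Mor D \<Longrightarrow> g \<in> Mor D \<Longrightarrow> Cod D f = Dom D g \<Longrightarrow> snd H (Comp D g f) = Comp D' (snd H g) (snd H f)"
    "\<And>i f. i \<in> {1..n} \<Longrightarrow> f \<in> V D i \<Longrightarrow> snd H f \<in> V D' i"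
    "\<And>f. f \<in> W D \<Longrightarrow> snd H f \<in> W D'"
  using assms unfolding relfun_def by blast+

lemma fcomp_relmaps:
  assumes rc: "is_relcat n T" and F: "(Fo, Fm) \<in> relmaps n T D" and H: "relfun n D D' H"
  shows "fcomp T H (Fo, Fm) \<in> relmaps n T D'"
proof -
  note f = relmapsE[OF F]
  note h = relfunE[OF H]
  note r = relcat_facts[OF rc]
  show ?thesis unfolding fcomp_def relmaps_mem fst_conv snd_conv
  proof (intro conjI ballI allI impI)
    fix i fa assume "i \<in> {1..n}" "fa \<in> V T i"
    moreover have "fa \<in> Mor T" using r(1) calculation by blast
    ultimately show "(if fa \<in> Mor T then snd H (Fm fa) else undefined) \<in> V D' i"
      using f(7) h(7) by simp
  next
    fix fa assume "fa \<in> W T"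
    moreover have "fa \<in> Mor T" using r(2) calculation by blast
    ultimately show "(if fa \<in> Mor T then snd H (Fm fa) else undefined) \<in> W D'"
      using f(8) h(8) by simp
  next
    fix fa g assume a: "fa \<in> Mor T" "g \<in> Mor T" "Cod T fa = Dom T g"
    then have "Comp T g fa \<in> Mor T" using r(5) by blast
    then show "(if Comp T g fa \<in> Mor T then snd H (Fm (Comp T g fa)) else undefined) =
      Comp D' (if g \<in> Mor T then snd H (Fm g) else undefined) (if fa \<in> Mor T then snd H (Fm fa) else undefined)"
      using a f(2,3,4,6) h(6) r(3) by simp
  next
    fix a assume "a \<in> Ob T"
    then show "(if a \<in> Ob T then fst H (Fo a) else undefined) \<in> Ob D'" using f(1) h(1) by simp
  next
    fix a assume "a \<in> Ob T"
    then show "(if Id T a \<in> Mor T then snd H (Fm (Id T a)) else undefined) =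
         Id D' (if a \<in> Ob T then fst H (Fo a) else undefined)" using f(1,5) h(5) r(4) by simp
  next
    fix fa assume "fa \<in> Mor T"
    then show "(if fa \<in> Mor T then snd H (Fm fa) else undefined) \<in> Mor D'" using f(2) h(2) by simp
  next
    fix fa assume "fa \<in> Mor T"
    then show "Dom D' (if fa \<in> Mor T then snd H (Fm fa) else undefined) =
      (if Dom T fa \<in> Ob T then fst H (Fo (Dom T fa)) else undefined)" using f(2,3) h(3) r(3) by simp
  next
    fix fa assume "fa \<in> Mor T"
    then show "Cod D' (if fa \<in> Mor T then snd H (Fm fa) else undefined) =
      (if Cod T fa \<in> Ob T then fst H (Fo (Cod T fa)) else undefined)" using f(2,4) h(4) r(3) by simp
  qed simp_all
qed


lemma drel_fun_simps:
  "fst (drel_fun f) (p, y) = (p, f p y)"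
  "snd (drel_fun f) ((p, y), (p', y'), alpha) = ((p, f p y), (p', f p' y'), alpha)"
  by (simp_all add: drel_fun_def)

lemma tuple3_cases: obtains p y p' y' alpha where "m = ((p, y), (p', y'), alpha)"
  by (metis prod.collapse)

lemma drel_fun_relfun:
  assumes f1: "\<And>q y. midx n q \<Longrightarrow> y \<in> Xs Y q \<Longrightarrow> f q y \<in> Xs Z q"
    and f2: "\<And>q q' alpha y. dmor n q q' alpha \<Longrightarrow> y \<in> Xs Y q' \<Longrightarrow>
        act Z q q' alpha (f q' y) = f q (act Y q q' alpha y)"
  shows "relfun n (delta_rel n Y) (delta_rel n Z) (drel_fun f)"
  unfolding relfun_def
proof (intro conjI ballI allI impI)
  fix a assume "a \<in> Ob (delta_rel n Y)"
  then show "fst (drel_fun f) a \<in> Ob (delta_rel n Z)"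
    using f1 by (cases a) (auto simp: drel_simps drel_fun_simps)
next
  fix m assume m: "m \<in> Mor (delta_rel n Y)"
  obtain p y p' y' alpha where e: "m = ((p, y), (p', y'), alpha)" by (rule tuple3_cases)
  show "snd (drel_fun f) m \<in> Mor (delta_rel n Z)"
    using m f1 f2[of p p' alpha y'] by (auto simp: e drel_fun_simps drel_Mor_iff)
next
  fix m :: "'a dmorph"
  obtain p y p' y' alpha where e: "m = ((p, y), (p', y'), alpha)" by (rule tuple3_cases)
  show "Dom (delta_rel n Z) (snd (drel_fun f) m) = fst (drel_fun f) (Dom (delta_rel n Y) m)"
    by (simp add: e drel_fun_simps drel_simps)
next
  fix m :: "'a dmorph"
  obtain p y p' y' alpha where e: "m = ((p, y), (p', y'), alpha)" by (rule tuple3_cases)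
  show "Cod (delta_rel n Z) (snd (drel_fun f) m) = fst (drel_fun f) (Cod (delta_rel n Y) m)"
    by (simp add: e drel_fun_simps drel_simps)
next
  fix a assume "a \<in> Ob (delta_rel n Y)"
  then show "snd (drel_fun f) (Id (delta_rel n Y) a) = Id (delta_rel n Z) (fst (drel_fun f) a)"
    by (cases a) (auto simp: drel_simps drel_fun_simps)
next
  fix g h assume "g \<in> Mor (delta_rel n Y)" "h \<in> Mor (delta_rel n Y)"
    "Cod (delta_rel n Y) g = Dom (delta_rel n Y) h"
  moreover obtain p y p' y' alpha where e: "g = ((p, y), (p', y'), alpha)" by (rule tuple3_cases)
  moreover obtain q z q' z' beta where e2: "h = ((q, z), (q', z'), beta)" by (rule tuple3_cases)
  ultimately show "snd (drel_fun f) (Comp (delta_rel n Y) h g) =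
          Comp (delta_rel n Z) (snd (drel_fun f) h) (snd (drel_fun f) g)"
    by (simp add: drel_fun_simps drel_simps)
next
  fix i m assume m: "m \<in> V (delta_rel n Y) i"
  obtain p y p' y' alpha where e: "m = ((p, y), (p', y'), alpha)" by (rule tuple3_cases)
  show "snd (drel_fun f) m \<in> V (delta_rel n Z) i"
    using m f1 f2[of p p' alpha y'] by (auto simp: e drel_fun_simps drel_Mor_iff drel_V)
next
  fix m assume m: "m \<in> W (delta_rel n Y)"
  obtain p y p' y' alpha where e: "m = ((p, y), (p', y'), alpha)" by (rule tuple3_cases)
  show "snd (drel_fun f) m \<in> W (delta_rel n Z)"
    using m f1 f2[of p p' alpha y'] by (auto simp: e drel_fun_simps drel_Mor_iff drel_W)
qed


lemma sssetE:
  assumes "is_ssset n X"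
  shows "\<And>p p' fs x. dmor n p p' fs \<Longrightarrow> x \<in> Xs X p' \<Longrightarrow> act X p p' fs x \<in> Xs X p"
    "\<And>p x. midx n p \<Longrightarrow> x \<in> Xs X p \<Longrightarrow> act X p p (did p) x = x"
    "\<And>p p' p'' f g x. dmor n p p' f \<Longrightarrow> dmor n p' p'' g \<Longrightarrow> x \<in> Xs X p'' \<Longrightarrow>
        act X p p'' (dcomp g f) x = act X p p' f (act X p' p'' g x)"
  using assms unfolding is_ssset_def by blast+

lemma yoneda_simps:
  "Xs (yoneda n p) q = {fs. dmor n q p fs}"
  "act (yoneda n p) a b alpha beta = dcomp beta alpha"
  by (simp_all add: yoneda_def)

lemma canon_eq: "canon n T X ((p, x), phi) = fcomp T (drel_fun (\<lambda>q beta. act X q p beta x)) phi"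
  by (simp add: canon_def)

lemma colim_elems_iff: "(((p, x), phi) \<in> colim_elems n T X) \<longleftrightarrow>
   midx n p \<and> x \<in> Xs X p \<and> phi \<in> relmaps n T (delta_rel n (yoneda n p))"
  by (simp add: colim_elems_def)

lemma colim_gen_iff: "((((p, x), phi), ((p', x'), psi)) \<in> colim_gen n T X) \<longleftrightarrow>
       ((p, x), phi) \<in> colim_elems n T X \<and> ((p', x'), psi) \<in> colim_elems n T X \<and>
       (\<exists>gamma. dmor n p p' gamma \<and> act X p p' gamma x' = x \<and>
          psi = fcomp T (drel_fun (\<lambda>q beta. dcomp gamma beta)) phi)"
  by (simp add: colim_gen_def)

lemma canon_relfun:
  assumes X: "is_ssset n X" and x: "x \<in> Xs X p"
  shows "relfun n (delta_rel n (yoneda n p)) (delta_rel n X) (drel_fun (\<lambda>q beta. act X q p beta x))"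
proof (rule drel_fun_relfun)
  fix q beta assume "midx n q" "beta \<in> Xs (yoneda n p) q"
  then show "act X q p beta x \<in> Xs X q" using sssetE(1)[OF X] x by (simp add: yoneda_simps)
next
  fix q q' alpha y assume "dmor n q q' alpha" "y \<in> Xs (yoneda n p) q'"
  then show "act X q q' alpha (act X q' p y x) = act X q p (act (yoneda n p) q q' alpha y) x"
    using sssetE(3)[OF X] x by (simp add: yoneda_simps)
qed

lemma canon_in:
  assumes rc: "is_relcat n T" and X: "is_ssset n X" and e: "e \<in> colim_elems n T X"
  shows "canon n T X e \<in> relmaps n T (delta_rel n X)"
proof -
  obtain p x Fo Fm where ee: "e = ((p, x), (Fo, Fm))" by (metis prod.collapse)
  have x: "x \<in> Xs X p" and F: "(Fo, Fm) \<in> relmaps n T (delta_rel n (yoneda n p))"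
    using e by (simp_all add: ee colim_elems_iff)
  show ?thesis unfolding ee canon_eq
    by (rule fcomp_relmaps[OF rc F canon_relfun[OF X x]])
qed

lemma canon_resp:
  assumes X: "is_ssset n X" and g: "(e1, e2) \<in> colim_gen n T X"
  shows "canon n T X e1 = canon n T X e2"
proof -
  obtain p x Fo Fm where e1: "e1 = ((p, x), (Fo, Fm))" by (metis prod.collapse)
  obtain p' x' psi where e2: "e2 = ((p', x'), psi)" by (metis prod.collapse)
  from g obtain gamma where gm: "dmor n p p' gamma" "act X p p' gamma x' = x"
    and psi: "psi = fcomp T (drel_fun (\<lambda>q beta. dcomp gamma beta)) (Fo, Fm)"
    and el1: "((p, x), (Fo, Fm)) \<in> colim_elems n T X" and el2: "((p', x'), psi) \<in> colim_elems n T X"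
    using g unfolding e1 e2 colim_gen_iff by blast
  have x': "x' \<in> Xs X p'" using el2 by (simp add: colim_elems_iff)
  have F: "(Fo, Fm) \<in> relmaps n T (delta_rel n (yoneda n p))" using el1 by (simp add: colim_elems_iff)
  have key: "act X q p' (dcomp gamma beta) x' = act X q p beta x" if "dmor n q p beta" for q beta
    using sssetE(3)[OF X that gm(1) x'] gm(2) by simp
  note f = relmapsE[OF F]
  have o: "fst (drel_fun (\<lambda>q beta. act X q p' beta x')) (fst (drel_fun (\<lambda>q beta. dcomp gamma beta)) (Fo a))
      = fst (drel_fun (\<lambda>q beta. act X q p beta x)) (Fo a)" if "a \<in> Ob T" for a
  proof -
    obtain q beta where "Fo a = (q, beta)" by (cases "Fo a")
    moreover have "Fo a \<in> Ob (delta_rel n (yoneda n p))" using f(1) that by blast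
    ultimately show ?thesis using key by (simp add: drel_fun_simps drel_simps yoneda_simps)
  qed
  have m: "snd (drel_fun (\<lambda>q beta. act X q p' beta x')) (snd (drel_fun (\<lambda>q beta. dcomp gamma beta)) (Fm h))
      = snd (drel_fun (\<lambda>q beta. act X q p beta x)) (Fm h)" if "h \<in> Mor T" for h
  proof -
    obtain q beta q' beta' alpha where e: "Fm h = ((q, beta), (q', beta'), alpha)" by (rule tuple3_cases)
    moreover have "Fm h \<in> Mor (delta_rel n (yoneda n p))" using f(2) that by blast
    ultimately show ?thesis using key by (simp add: drel_fun_simps drel_Mor_iff yoneda_simps)
  qed
  show ?thesis unfolding e1 e2 canon_eq psi fcomp_def
    using o m by (auto simp: fun_eq_iff)
qed


lemma drel_fun_gen:
  "fst (drel_fun f) z = (fst z, f (fst z) (snd z))"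
  "snd (snd (snd (drel_fun f) m)) = snd (snd m)"
  "fst (fst (snd (drel_fun f) m)) = fst (fst m)"
  "fst (fst (snd (snd (drel_fun f) m))) = fst (fst (snd m))"
  by (cases z, simp add: drel_fun_def, (rule tuple3_cases[of m], simp add: drel_fun_def)+)

lemma relmaps_drel_mor:
  assumes "(Fo, Fm) \<in> relmaps n T (delta_rel n Y)" "f \<in> Mor T"
  shows "Fm f = (Fo (Dom T f), Fo (Cod T f), snd (snd (Fm f)))"
  using relmapsE(3,4)[OF assms(1) assms(2)] by (simp add: drel_simps) (metis prod.collapse)

definition uarr :: "('o, 'm, 'e) cat_scheme \<Rightarrow> 'o \<Rightarrow> 'o \<Rightarrow> 'm" where
  "uarr T t a = (THE f. f \<in> Mor T \<and> Dom T f = a \<and> Cod T f = t)"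

lemma uarr:
  assumes "\<forall>a\<in>Ob T. \<exists>!f. f \<in> Mor T \<and> Dom T f = a \<and> Cod T f = t" "a \<in> Ob T"
  shows "uarr T t a \<in> Mor T \<and> Dom T (uarr T t a) = a \<and> Cod T (uarr T t a) = t"
proof -
  have "\<exists>!f. f \<in> Mor T \<and> Dom T f = a \<and> Cod T f = t" using assms by blast
  then show ?thesis unfolding uarr_def by (rule theI')
qed

lemma uarr_uniq:
  assumes "\<forall>a\<in>Ob T. \<exists>!f. f \<in> Mor T \<and> Dom T f = a \<and> Cod T f = t" "a \<in> Ob T"
    "f \<in> Mor T" "Dom T f = a" "Cod T f = t"
  shows "f = uarr T t a"
proof -
  have "\<exists>!f. f \<in> Mor T \<and> Dom T f = a \<and> Cod T f = t" using assms by blast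
  moreover have "f \<in> Mor T \<and> Dom T f = a \<and> Cod T f = t" using assms by blast
  ultimately show ?thesis unfolding uarr_def by (rule the1_equality[symmetric])
qed

definition Ro where
  "Ro T t Fo Fm = (\<lambda>a. if a \<in> Ob T then (fst (Fo a), snd (snd (Fm (uarr T t a)))) else undefined)"

definition Rm where
  "Rm T t Fo Fm = (\<lambda>f. if f \<in> Mor T then (Ro T t Fo Fm (Dom T f), Ro T t Fo Fm (Cod T f), snd (snd (Fm f))) else undefined)"

definition Rmap where
  "Rmap T t phi = (case phi of (Fo, Fm) \<Rightarrow> (Fo t, (Ro T t Fo Fm, Rm T t Fo Fm)))"

lemma R_props:
  assumes rc: "is_relcat n T" and X: "is_ssset n X" and t: "t \<in> Ob T"
    and tm: "\<forall>a\<in>Ob T. \<exists>!f. f \<in> Mor T \<and> Dom T f = a \<and> Cod T f = t"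
    and F: "(Fo, Fm) \<in> relmaps n T (delta_rel n X)"
  shows "Rmap T t (Fo, Fm) \<in> colim_elems n T X \<and> canon n T X (Rmap T t (Fo, Fm)) = (Fo, Fm)"
proof -
  note f = relmapsE[OF F]
  note r = relcat_facts[OF rc]
  obtain p x where pt: "Fo t = (p, x)" by (cases "Fo t")
  have px: "midx n p" "x \<in> Xs X p" using f(1)[OF t] by (simp_all add: pt drel_simps)
  let ?u = "uarr T t"
  let ?th = "\<lambda>m :: 'x dmorph. snd (snd m)"
  have U: "dmor n (fst (Fo a)) p (?th (Fm (?u a))) \<and> act X (fst (Fo a)) p (?th (Fm (?u a))) x = snd (Fo a)
     \<and> midx n (fst (Fo a))" if a: "a \<in> Ob T" for a
  proof -
    have u: "?u a \<in> Mor T" "Dom T (?u a) = a" "Cod T (?u a) = t" using uarr[OF tm a] by auto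
    have "Fm (?u a) = (Fo a, Fo t, ?th (Fm (?u a)))" by (metis u(2) u(3) relmaps_drel_mor[OF F u(1)])
    moreover have "Fm (?u a) \<in> Mor (delta_rel n X)" using f(2) u by blast
    ultimately have "((fst (Fo a), snd (Fo a)), (p, x), ?th (Fm (?u a))) \<in> Mor (delta_rel n X)"
      unfolding pt by (metis prod.collapse)
    then show ?thesis unfolding drel_Mor_iff by simp
  qed
  have M12: "fst (Fm h) = Fo (Dom T h) \<and> fst (snd (Fm h)) = Fo (Cod T h)" if h: "h \<in> Mor T" for h
    using f(3,4)[OF h] by (simp add: drel_simps)
  have M3: "dmor n (fst (Fo (Dom T h))) (fst (Fo (Cod T h))) (?th (Fm h))" if h: "h \<in> Mor T" for h
  proof -
    obtain q y q' y' alpha where e: "Fm h = ((q, y), (q', y'), alpha)" by (rule tuple3_cases)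
    have "Fm h \<in> Mor (delta_rel n X)" using f(2) h by blast
    then show ?thesis using M12[OF h] by (simp add: e drel_Mor_iff) (metis fst_conv)
  qed
  have C: "?th (Fm (?u (Dom T h))) = dcomp (?th (Fm (?u (Cod T h)))) (?th (Fm h))" if h: "h \<in> Mor T" for h
  proof -
    have ob: "Dom T h \<in> Ob T" "Cod T h \<in> Ob T" using r(3) h by auto
    have ub: "?u (Cod T h) \<in> Mor T" "Dom T (?u (Cod T h)) = Cod T h" "Cod T (?u (Cod T h)) = t"
      using uarr[OF tm ob(2)] by auto
    have cm: "Comp T (?u (Cod T h)) h \<in> Mor T" "Dom T (Comp T (?u (Cod T h)) h) = Dom T h"
        "Cod T (Comp T (?u (Cod T h)) h) = t"
      using r(5)[OF h ub(1)] ub by auto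
    have "Comp T (?u (Cod T h)) h = ?u (Dom T h)"
      using uarr_uniq[OF tm ob(1) cm] .
    then have "Fm (?u (Dom T h)) = Comp (delta_rel n X) (Fm (?u (Cod T h))) (Fm h)"
      using f(6)[OF h ub(1)] ub by simp
    then show ?thesis by (simp add: drel_simps)
  qed
  let ?Ro = "Ro T t Fo Fm" and ?Rm = "Rm T t Fo Fm"
  have Ro_a: "?Ro a = (fst (Fo a), ?th (Fm (?u a)))" if "a \<in> Ob T" for a
    using that by (simp add: Ro_def)
  have Rm_h: "?Rm h = (?Ro (Dom T h), ?Ro (Cod T h), ?th (Fm h))" if "h \<in> Mor T" for h
    using that by (simp add: Rm_def)
  have Rel: "(?Ro, ?Rm) \<in> relmaps n T (delta_rel n (yoneda n p))"
    unfolding relmaps_mem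
  proof (intro conjI ballI allI impI)
    fix a assume a: "a \<in> Ob T"
    show "?Ro a \<in> Ob (delta_rel n (yoneda n p))"
      using U[OF a] by (simp add: Ro_a[OF a] drel_simps yoneda_simps)
  next
    fix h assume h: "h \<in> Mor T"
    have ob: "Dom T h \<in> Ob T" "Cod T h \<in> Ob T" using r(3) h by auto
    show "?Rm h \<in> Mor (delta_rel n (yoneda n p))"
      using U[OF ob(1)] U[OF ob(2)] M12[OF h] M3[OF h] C[OF h]
      by (simp add: Rm_h[OF h] Ro_a[OF ob(1)] Ro_a[OF ob(2)] drel_Mor_iff yoneda_simps)
  next
    fix h assume h: "h \<in> Mor T"
    show "Dom (delta_rel n (yoneda n p)) (?Rm h) = ?Ro (Dom T h)"
      by (simp add: Rm_h[OF h] drel_simps)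
  next
    fix h assume h: "h \<in> Mor T"
    show "Cod (delta_rel n (yoneda n p)) (?Rm h) = ?Ro (Cod T h)"
      by (simp add: Rm_h[OF h] drel_simps)
  next
    fix a assume a: "a \<in> Ob T"
    have i: "Id T a \<in> Mor T" "Dom T (Id T a) = a" "Cod T (Id T a) = a" using r(4)[OF a] by auto
    show "?Rm (Id T a) = Id (delta_rel n (yoneda n p)) (?Ro a)"
      using f(5)[OF a] by (simp add: Rm_h[OF i(1)] i Ro_a[OF a] drel_simps)
  next
    fix h g assume hg: "h \<in> Mor T" "g \<in> Mor T" "Cod T h = Dom T g"
    have c: "Comp T g h \<in> Mor T" "Dom T (Comp T g h) = Dom T h" "Cod T (Comp T g h) = Cod T g"
      using r(5)[OF hg] by auto
    show "?Rm (Comp T g h) = Comp (delta_rel n (yoneda n p)) (?Rm g) (?Rm h)"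
      using f(6)[OF hg] by (simp add: Rm_h[OF c(1)] Rm_h[OF hg(1)] Rm_h[OF hg(2)] c drel_simps)
  next
    fix i h assume i: "i \<in> {1..n}" and h: "h \<in> V T i"
    have hm: "h \<in> Mor T" using r(1)[OF i] h by blast
    have ob: "Dom T h \<in> Ob T" "Cod T h \<in> Ob T" using r(3) hm by auto
    have "Fm h \<in> V (delta_rel n X) i" using f(7)[OF i h] .
    then have "?th (Fm h) ! i ! (fst (Fo (Dom T h)) ! i) = fst (Fo (Cod T h)) ! i"
      using M12[OF hm] by (simp add: drel_V)
    moreover have "?Rm h \<in> Mor (delta_rel n (yoneda n p))"
      using U[OF ob(1)] U[OF ob(2)] M12[OF hm] M3[OF hm] C[OF hm]
      by (simp add: Rm_h[OF hm] Ro_a[OF ob(1)] Ro_a[OF ob(2)] drel_Mor_iff yoneda_simps)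
    ultimately show "?Rm h \<in> V (delta_rel n (yoneda n p)) i"
      by (simp add: drel_V Rm_h[OF hm] Ro_a[OF ob(1)] Ro_a[OF ob(2)])
  next
    fix h assume h: "h \<in> W T"
    have hm: "h \<in> Mor T" using r(2) h by blast
    have ob: "Dom T h \<in> Ob T" "Cod T h \<in> Ob T" using r(3) hm by auto
    have "Fm h \<in> W (delta_rel n X)" using f(8)[OF h] .
    then have "\<forall>i\<in>{1..n}. ?th (Fm h) ! i ! (fst (Fo (Dom T h)) ! i) = fst (Fo (Cod T h)) ! i"
      using M12[OF hm] by (simp add: drel_W)
    moreover have "?Rm h \<in> Mor (delta_rel n (yoneda n p))"
      using U[OF ob(1)] U[OF ob(2)] M12[OF hm] M3[OF hm] C[OF hm]
      by (simp add: Rm_h[OF hm] Ro_a[OF ob(1)] Ro_a[OF ob(2)] drel_Mor_iff yoneda_simps)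
    ultimately show "?Rm h \<in> W (delta_rel n (yoneda n p))"
      by (simp add: drel_W Rm_h[OF hm] Ro_a[OF ob(1)] Ro_a[OF ob(2)])
  next
    fix a assume "a \<notin> Ob T" then show "?Ro a = undefined" by (simp add: Ro_def)
  next
    fix h assume "h \<notin> Mor T" then show "?Rm h = undefined" by (simp add: Rm_def)
  qed
  have R: "Rmap T t (Fo, Fm) = ((p, x), (?Ro, ?Rm))" by (simp add: Rmap_def pt)
  have elem: "Rmap T t (Fo, Fm) \<in> colim_elems n T X"
    unfolding R colim_elems_iff using px Rel by simp
  have can: "canon n T X (Rmap T t (Fo, Fm)) = (Fo, Fm)"
  proof -
    have o: "(if a \<in> Ob T then fst (drel_fun (\<lambda>q beta. act X q p beta x)) (?Ro a) else undefined) = Fo a" for a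
    proof (cases "a \<in> Ob T")
      case True then show ?thesis using U[OF True] by (simp add: Ro_a drel_fun_simps)
    next
      case False then show ?thesis using f(9) by simp
    qed
    have m: "(if h \<in> Mor T then snd (drel_fun (\<lambda>q beta. act X q p beta x)) (?Rm h) else undefined) = Fm h" for h
    proof (cases "h \<in> Mor T")
      case True
      have ob: "Dom T h \<in> Ob T" "Cod T h \<in> Ob T" using r(3) True by auto
      have "(if h \<in> Mor T then snd (drel_fun (\<lambda>q beta. act X q p beta x)) (?Rm h) else undefined)
          = (Fo (Dom T h), Fo (Cod T h), ?th (Fm h))"
        using U[OF ob(1)] U[OF ob(2)] True
        by (simp add: Rm_h Ro_a[OF ob(1)] Ro_a[OF ob(2)] drel_fun_simps)
      also have "\<dots> = Fm h" using relmaps_drel_mor[OF F True] by (rule sym)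
      finally show ?thesis .
    next
      case False then show ?thesis using f(10) by simp
    qed
    show ?thesis unfolding R canon_eq fcomp_def fst_conv snd_conv o m by (rule refl)
  qed
  show ?thesis using elem can by simp
qed


lemma drel_fun_snd_gen: "snd (drel_fun f) (A, B, alpha) = (fst (drel_fun f) A, fst (drel_fun f) B, alpha)"
  by (cases A, cases B) (simp add: drel_fun_def)

lemma R_back:
  assumes rc: "is_relcat n T" and X: "is_ssset n X" and t: "t \<in> Ob T"
    and tm: "\<forall>a\<in>Ob T. \<exists>!f. f \<in> Mor T \<and> Dom T f = a \<and> Cod T f = t"
    and e: "e \<in> colim_elems n T X"
  shows "(Rmap T t (canon n T X e), e) \<in> colim_gen n T X"
proof -
  obtain p x Fo Fm where ee: "e = ((p, x), (Fo, Fm))" by (metis prod.collapse)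
  have x: "x \<in> Xs X p" and F: "(Fo, Fm) \<in> relmaps n T (delta_rel n (yoneda n p))"
    using e by (simp_all add: ee colim_elems_iff)
  note f = relmapsE[OF F]
  note r = relcat_facts[OF rc]
  let ?g = "\<lambda>q beta. act X q p beta x"
  define Fo' where "Fo' = (\<lambda>a. if a \<in> Ob T then fst (drel_fun ?g) (Fo a) else undefined)"
  define Fm' where "Fm' = (\<lambda>h. if h \<in> Mor T then snd (drel_fun ?g) (Fm h) else undefined)"
  have ce: "canon n T X e = (Fo', Fm')" unfolding ee canon_eq fcomp_def Fo'_def Fm'_def fst_conv snd_conv by (rule refl)
  have cin: "(Fo', Fm') \<in> relmaps n T (delta_rel n X)" using canon_in[OF rc X e] ce by simp
  have Rel: "Rmap T t (Fo', Fm') \<in> colim_elems n T X" using R_props[OF rc X t tm cin] by simp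
  obtain q beta where Fot: "Fo t = (q, beta)" by (cases "Fo t")
  have qb: "dmor n q p beta" using f(1)[OF t] by (simp add: Fot drel_simps yoneda_simps)
  have Fo't: "Fo' t = (q, act X q p beta x)" using t by (simp add: Fo'_def Fot drel_fun_simps)
  let ?Ro = "Ro T t Fo' Fm'" and ?Rm = "Rm T t Fo' Fm'"
  let ?H = "drel_fun (\<lambda>q' delta. dcomp beta delta)"
  have R: "Rmap T t (Fo', Fm') = ((q, act X q p beta x), (?Ro, ?Rm))" by (simp add: Rmap_def Fo't)
  have obj: "fst ?H (?Ro a) = Fo a" if a: "a \<in> Ob T" for a
  proof -
    have u: "uarr T t a \<in> Mor T" "Dom T (uarr T t a) = a" "Cod T (uarr T t a) = t" using uarr[OF tm a] by auto
    obtain qa ba where Foa: "Fo a = (qa, ba)" by (cases "Fo a")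
    have eq: "Fm (uarr T t a) = (Fo a, Fo t, snd (snd (Fm (uarr T t a))))"
      by (metis u(2) u(3) relmaps_drel_mor[OF F u(1)])
    have "Fm (uarr T t a) \<in> Mor (delta_rel n (yoneda n p))" using f(2) u(1) by blast
    then have "((qa, ba), (q, beta), snd (snd (Fm (uarr T t a)))) \<in> Mor (delta_rel n (yoneda n p))"
      using eq unfolding Foa Fot by metis
    then have "dcomp beta (snd (snd (Fm (uarr T t a)))) = ba" by (simp add: drel_Mor_iff yoneda_simps)
    moreover have "?Ro a = (qa, snd (snd (Fm (uarr T t a))))"
      using a u(1) by (simp add: Ro_def Fo'_def Fm'_def Foa drel_fun_gen)
    ultimately show ?thesis by (simp add: drel_fun_simps Foa)
  qed
  have o: "Fo = (\<lambda>a. if a \<in> Ob T then fst ?H (?Ro a) else undefined)"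
    using obj f(9) by (auto simp: fun_eq_iff)
  have m: "Fm = (\<lambda>h. if h \<in> Mor T then snd ?H (?Rm h) else undefined)"
  proof (rule ext)
    fix h show "Fm h = (if h \<in> Mor T then snd ?H (?Rm h) else undefined)"
    proof (cases "h \<in> Mor T")
      case True
      have ob: "Dom T h \<in> Ob T" "Cod T h \<in> Ob T" using r(3) True by auto
      have "?Rm h = (?Ro (Dom T h), ?Ro (Cod T h), snd (snd (Fm h)))"
        using True by (simp add: Rm_def Fm'_def drel_fun_gen)
      then have "snd ?H (?Rm h) = (Fo (Dom T h), Fo (Cod T h), snd (snd (Fm h)))"
        by (simp add: drel_fun_snd_gen obj[OF ob(1)] obj[OF ob(2)])
      then show ?thesis using True relmaps_drel_mor[OF F True] by simp
    next
      case False then show ?thesis using f(10) by simp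
    qed
  qed
  have "(Fo, Fm) = fcomp T ?H (?Ro, ?Rm)" unfolding fcomp_def fst_conv snd_conv
    using o m by simp
  then show ?thesis unfolding ce R unfolding ee colim_gen_iff
    using Rel[unfolded R] e[unfolded ee] qb by blast
qed


theorem proposition6p2:
  fixes n :: nat
    and T :: "('o, 'm) relcat"
    and X :: "'x ssset"
  assumes "n \<ge> 1"
    and "is_relcat n T"
    and "is_poset_cat T"
    and "has_terminal T"
    and "is_ssset n X"
  shows "bij_betw (canon_colim n T X) (colim_set n T X) (relmaps n T (delta_rel n X))"
proof -
  note rc = assms(2) and X = assms(5)
  obtain t where t: "t \<in> Ob T" and tm: "\<forall>a\<in>Ob T. \<exists>!f. f \<in> Mor T \<and> Dom T f = a \<and> Cod T f = t"
    using assms(4) unfolding has_terminal_def by blast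
  let ?E = "colim_elems n T X" and ?r = "colim_rel n T X"
  have eqv: "equiv UNIV ?r"
    unfolding colim_rel_def equiv_def UNIV_Times_UNIV
    by (intro conjI subset_UNIV refl_rtrancl sym_rtrancl[OF sym_Un_converse] trans_rtrancl)
  have resp: "canon n T X e1 = canon n T X e2" if "(e1, e2) \<in> ?r" for e1 e2
    using that unfolding colim_rel_def
  proof (induction rule: rtrancl_induct)
    case base then show ?case by simp
  next
    case (step y z)
    then show ?case by (metis UnE converseD canon_resp[OF X])
  qed
  have bk: "(e, Rmap T t (canon n T X e)) \<in> ?r" if "e \<in> ?E" for e
  proof -
    have "(Rmap T t (canon n T X e), e) \<in> colim_gen n T X" using R_back[OF rc X t tm that] .
    then show ?thesis unfolding colim_rel_def by blast
  qed
  have cc: "canon_colim n T X (?r``{e}) = canon n T X e" for e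
  proof -
    have "canon n T X ` (?r``{e}) = {canon n T X e}"
    proof
      show "canon n T X ` (?r``{e}) \<subseteq> {canon n T X e}" using resp by (auto dest: sym)
      have "e \<in> ?r``{e}" unfolding colim_rel_def by blast
      then show "{canon n T X e} \<subseteq> canon n T X ` (?r``{e})" by blast
    qed
    then show ?thesis unfolding canon_colim_def by simp
  qed
  show ?thesis unfolding bij_betw_def
  proof
    show "inj_on (canon_colim n T X) (colim_set n T X)"
    proof (rule inj_onI)
      fix c1 c2 assume c1: "c1 \<in> colim_set n T X" and c2: "c2 \<in> colim_set n T X"
        and eq: "canon_colim n T X c1 = canon_colim n T X c2"
      obtain e1 where e1: "c1 = ?r``{e1}" "e1 \<in> ?E" using c1 unfolding colim_set_def by (rule quotientE)
      obtain e2 where e2: "c2 = ?r``{e2}" "e2 \<in> ?E" using c2 unfolding colim_set_def by (rule quotientE)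
      have ce: "canon n T X e1 = canon n T X e2" using eq cc e1 e2 by simp
      have "(e1, Rmap T t (canon n T X e1)) \<in> ?r" using bk[OF e1(2)] .
      moreover have "(Rmap T t (canon n T X e1), e2) \<in> ?r"
      proof -
        have "sym ?r" using eqv unfolding equiv_def by blast
        then show ?thesis using bk[OF e2(2)] ce by (simp add: symD)
      qed
      ultimately have "(e1, e2) \<in> ?r" using eqv unfolding equiv_def trans_def by blast
      then show "c1 = c2" using e1 e2 equiv_class_eq_iff[OF eqv] by blast
    qed
  next
    show "canon_colim n T X ` colim_set n T X = relmaps n T (delta_rel n X)"
    proof
      show "canon_colim n T X ` colim_set n T X \<subseteq> relmaps n T (delta_rel n X)"
      proof
        fix y assume "y \<in> canon_colim n T X ` colim_set n T X"
        then obtain c where c: "c \<in> colim_set n T X" "y = canon_colim n T X c" by blast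
        obtain e where e: "c = ?r``{e}" "e \<in> ?E" using c(1) unfolding colim_set_def by (rule quotientE)
        show "y \<in> relmaps n T (delta_rel n X)" using c(2) e cc canon_in[OF rc X e(2)] by simp
      qed
    next
      show "relmaps n T (delta_rel n X) \<subseteq> canon_colim n T X ` colim_set n T X"
      proof
        fix phi assume phi: "phi \<in> relmaps n T (delta_rel n X)"
        obtain Fo Fm where pe: "phi = (Fo, Fm)" by (cases phi)
        have R: "Rmap T t phi \<in> ?E \<and> canon n T X (Rmap T t phi) = phi"
          using R_props[OF rc X t tm phi[unfolded pe]] pe by simp
        have "?r``{Rmap T t phi} \<in> colim_set n T X" unfolding colim_set_def
          using R by (blast intro: quotientI)
        moreover have "canon_colim n T X (?r``{Rmap T t phi}) = phi" using cc R by simp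
        ultimately show "phi \<in> canon_colim n T X ` colim_set n T X" by (metis image_eqI)
      qed
    qed
  qed
qed

end
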